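(* Fix $0\le k<1$. For every $\eta>0$ there exists $\varepsilon_0>0$ such that the following holds: if $0\le\varepsilon<\varepsilon_0$ and $h:\mathbb{D}\to\mathbb{D}$ is holomorphic with $h(0)=\varepsilon$ and \[ h(r\mathbb{D})\subset \overline{B}\Big(\tfrac{1-r^2}{2},\tfrac{1+r^2}{2}\Big)\quad\text{for all } r\in(0,1), \] then $|h(k)|\le k^2+\eta$. In other words, $|h(k)|\le k^2+o(1)$ as $\varepsilon\to0$, uniformly over all such $h$.
   Context: $\mathbb{D}$ is the open unit disk, $r\mathbb{D}=\{|z|<r\}$, and $\overline{B}(c,\rho)$ is the closed disk with center $c$ and radius $\rho$ (so $\overline{B}((1-r^2)/2,(1+r^2)/2)$ is the closed disk with diameter $[-r^2,1]$). *)

theory Defs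
  imports "HOL-Analysis.Analysis"
begin

end

theory Submission
  imports Defs "HOL-Complex_Analysis.Complex_Analysis"
begin

lemma moeb_inv_bound:
  fixes a w :: complex
  assumes "norm a < 1" "norm w \<le> 1"
  shows "norm (Moebius_function 0 (-a) w) \<le> (norm w + norm a) / (1 - norm a)"
proof -
  have num: "norm (w + a) \<le> norm w + norm a" by (rule norm_triangle_ineq)
  have "norm (cnj a * w) \<le> norm a" using assms by (simp add: norm_mult mult_left_le)
  then have den: "norm (1 + cnj a * w) \<ge> 1 - norm a"
    by (metis add.commute diff_le_eq norm_diff_ineq norm_one order_trans add_le_cancel_left
        le_diff_eq)
  have pos: "1 - norm a > 0" using assms by simp
  have "norm (Moebius_function 0 (-a) w) = norm (w + a) / norm (1 + cnj a * w)"
    by (simp add: Moebius_function_def norm_divide)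
  also have "\<dots> \<le> (norm w + norm a) / (1 - norm a)"
    using num den pos by (intro frac_le) auto
  finally show ?thesis .
qed

lemma cball_Re:
  assumes "w \<in> cball (complex_of_real c) \<rho>"
  shows "Re w \<ge> c - \<rho>"
proof -
  have "\<bar>Re (complex_of_real c - w)\<bar> \<le> cmod (complex_of_real c - w)" by (rule abs_Re_le_cmod)
  then show ?thesis using assms by (auto simp: dist_norm)
qed

lemma arith_final:
  fixes X \<delta> k Q' qk G H \<epsilon> :: real
  assumes "0 \<le> X" "X \<le> 11*\<delta>" "0 < \<delta>" "\<delta> \<le> 1/100" "0 \<le> k" "k < 1"
    "Q' \<le> (k+X)/(1-X)" "qk = (1+\<delta>)*Q'" "G = k*qk" "H \<le> (G+\<epsilon>)/(1-\<epsilon>)"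
    "0 \<le> \<epsilon>" "\<epsilon> \<le> \<delta>^2"
  shows "H \<le> k^2 + 200*\<delta>"
proof -
  have X2: "X \<le> 1/2" using assms by simp
  have "(k+X)/(1-X) \<le> k + 4*X"
  proof -
    have "k + X \<le> (k+4*X)*(1-X)"
    proof -
      have "0 \<le> X*(3-k-4*X)" using assms X2 by (intro mult_nonneg_nonneg) auto
      then show ?thesis by (simp add: algebra_simps)
    qed
    then show ?thesis using X2 by (simp add: divide_le_eq)
  qed
  then have Q1: "Q' \<le> k + 44*\<delta>" using assms by linarith
  have "qk \<le> (1+\<delta>)*(k + 44*\<delta>)" using Q1 assms by (simp add: mult_left_mono)
  also have "\<dots> \<le> k + 46*\<delta>"
  proof -
    have "\<delta>*(k+44*\<delta>) \<le> \<delta>*2" using assms by (intro mult_left_mono) auto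
    then show ?thesis by (simp add: algebra_simps)
  qed
  finally have qk: "qk \<le> k + 46*\<delta>" .
  have "G \<le> k*(k+46*\<delta>)" using qk assms by (simp add: mult_left_mono)
  also have "\<dots> \<le> k^2 + 46*\<delta>" using assms by (simp add: algebra_simps power2_eq_square)
  finally have G: "G \<le> k^2 + 46*\<delta>" .
  have "\<delta>*\<delta> \<le> \<delta>*(1/100)" using assms by (intro mult_left_mono) auto
  then have "\<delta>^2 \<le> \<delta>/100" by (simp add: power2_eq_square)
  then have e1: "\<epsilon> \<le> \<delta>/100" using assms(12) by linarith
  have "G + \<epsilon> \<le> (k^2+200*\<delta>)*(1-\<epsilon>)"
  proof -
    have k2: "k^2 \<le> 1" using assms(5,6) by (intro power_le_one) auto
    have "(k^2+200*\<delta>)*\<epsilon> \<le> 3 * \<epsilon>"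
      using assms k2 by (intro mult_right_mono) auto
    moreover have "(k^2+200*\<delta>)*(1-\<epsilon>) = k^2+200*\<delta> - (k^2+200*\<delta>)*\<epsilon>"
      by (simp add: algebra_simps)
    ultimately show ?thesis using G e1 assms(3) by linarith
  qed
  then have "(G+\<epsilon>)/(1-\<epsilon>) \<le> k^2+200*\<delta>" using e1 assms by (simp add: divide_le_eq)
  then show ?thesis using assms by linarith
qed

lemma hg_diff:
  fixes w :: complex and e :: real
  assumes "0 \<le> e" "e \<le> 1/2" "norm w \<le> 1"
  shows "norm (Moebius_function 0 (- complex_of_real e) w - w) \<le> 4*e"
proof -
  have "norm (complex_of_real e * w) \<le> e" using assms by (simp add: norm_mult mult_left_le)
  then have den: "norm (1 + complex_of_real e * w) \<ge> 1 - e"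
    by (metis diff_le_eq norm_diff_ineq norm_one order_trans add_le_cancel_left)
  then have nz: "1 + complex_of_real e * w \<noteq> 0" using assms by auto
  have eq: "Moebius_function 0 (- complex_of_real e) w - w
      = complex_of_real e * (1 - w*w) / (1 + complex_of_real e * w)"
    using nz by (simp add: Moebius_function_def field_simps)
  have n1: "norm (1 - w*w) \<le> 2"
  proof -
    have "norm (1 - w*w) \<le> norm (1::complex) + norm (w*w)" by (rule norm_triangle_ineq4)
    also have "\<dots> \<le> 2" using assms by (simp add: norm_mult mult_le_one)
    finally show ?thesis .
  qed
  have "norm (Moebius_function 0 (- complex_of_real e) w - w)
      = e * norm (1 - w*w) / norm (1 + complex_of_real e * w)"
    using assms by (simp add: eq norm_mult norm_divide)
  also have "\<dots> \<le> (e * 2) / (1/2)"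
    using den n1 assms by (intro frac_le mult_left_mono) auto
  finally show ?thesis by simp
qed

lemma core:
  fixes k \<delta> \<epsilon> :: real and h :: "complex \<Rightarrow> complex"
  assumes k: "0 \<le> k" "k < 1" and d: "0 < \<delta>" "\<delta> \<le> 1/100" and e: "0 \<le> \<epsilon>" "\<epsilon> < \<delta>^2"
    and hol: "h holomorphic_on ball 0 1" and hb: "h ` ball 0 1 \<subseteq> ball 0 1"
    and h0: "h 0 = complex_of_real \<epsilon>"
    and cons: "\<forall>r. 0 < r \<and> r < 1 \<longrightarrow>
              h ` ball 0 r \<subseteq> cball (complex_of_real ((1 - r\<^sup>2) / 2)) ((1 + r\<^sup>2) / 2)"
  shows "cmod (h (complex_of_real k)) \<le> k\<^sup>2 + 200*\<delta>"
proof -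
  have dd: "\<delta>^2 \<le> \<delta>/100"
  proof -
    have "\<delta>*\<delta> \<le> \<delta>*(1/100)" using d by (intro mult_left_mono) auto
    then show ?thesis by (simp add: power2_eq_square)
  qed
  have e1: "\<epsilon> \<le> 1/2" using e dd d by linarith
  have ne: "norm (complex_of_real \<epsilon>) < 1" using e e1 by simp
  have hb': "norm (h z) < 1" if "norm z < 1" for z
  proof -
    have "z \<in> ball 0 1" using that by simp
    then have "h z \<in> ball 0 1" using hb by blast
    then show ?thesis by simp
  qed
  define g where "g = (\<lambda>z. Moebius_function 0 (complex_of_real \<epsilon>) (h z))"
  have gh: "g holomorphic_on ball 0 1"
    using holomorphic_on_compose_gen[OF hol Moebius_function_holomorphic[OF ne] hb]
    by (simp add: g_def o_def)
  have g0: "g 0 = 0" by (simp add: g_def h0 Moebius_function_eq_zero)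
  have gb: "norm z < 1 \<Longrightarrow> norm (g z) < 1" for z
    unfolding g_def using Moebius_function_norm_lt_1[OF ne hb'] by blast
  have hg: "norm z < 1 \<Longrightarrow> h z = Moebius_function 0 (- complex_of_real \<epsilon>) (g z)" for z
    unfolding g_def using Moebius_function_compose[of "- complex_of_real \<epsilon>" "complex_of_real \<epsilon>" "h z"] ne hb'
    by simp
  obtain q where qh: "q holomorphic_on ball 0 1" and gq: "\<And>z. norm z < 1 \<Longrightarrow> g z = z * q z"
    and dq: "deriv g 0 = q 0"
    using Schwarz3[OF gh g0] by blast
  have qb: "norm (q z) \<le> 1" if z: "norm z < 1" for z
  proof (cases "z = 0")
    case True then show ?thesis using Schwarz_Lemma(2)[OF gh g0 gb, of 0] dq by simp
  next
    case False
    have "norm z * norm (q z) \<le> norm z * 1" using Schwarz_Lemma(1)[OF gh g0 gb z] gq[OF z] by (simp add: norm_mult)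
    then show ?thesis using False by simp
  qed
  have qL: "norm (q z - q 0) \<le> 3 * norm z" if z: "norm z < 1" for z
  proof -
    define f where "f = (\<lambda>z. (q z - q 0) / 3)"
    have fh: "f holomorphic_on ball 0 1" unfolding f_def using qh by (intro holomorphic_intros) auto
    have f0: "f 0 = 0" by (simp add: f_def)
    have fb: "norm (f w) < 1" if w: "norm w < 1" for w
    proof -
      have "norm (q w - q 0) \<le> norm (q w) + norm (q 0)" by (rule norm_triangle_ineq4)
      also have "\<dots> \<le> 2" using qb[OF w] qb[of 0] by simp
      finally show ?thesis by (simp add: f_def norm_divide)
    qed
    have "norm (f z) \<le> norm z" using Schwarz_Lemma(1)[OF fh f0 fb z] .
    then show ?thesis by (simp add: f_def norm_divide)
  qed
  have q0b: "norm (q 0) \<le> 11*\<delta>"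
  proof (cases "q 0 = 0")
    case True then show ?thesis using d by simp
  next
    case False
    define z where "z = - complex_of_real \<delta> * cnj (q 0) / complex_of_real (norm (q 0))"
    have nz: "norm z = \<delta>" using False d by (simp add: z_def norm_mult norm_divide)
    have z1: "norm z < 1" using nz d by simp
    have zq: "z * q 0 = - complex_of_real (\<delta> * norm (q 0))"
    proof -
      have "cnj (q 0) * q 0 = complex_of_real ((norm (q 0))^2)"
        by (metis complex_norm_square mult.commute)
      then show ?thesis using False
        by (simp add: z_def power2_eq_square field_simps)
    qed
    have gz: "g z = z * q 0 + z * (q z - q 0)" using gq[OF z1] by (simp add: algebra_simps)
    have "Re (z * (q z - q 0)) \<le> norm (z * (q z - q 0))" by (rule complex_Re_le_cmod)
    also have "\<dots> \<le> \<delta> * (3 * \<delta>)" using qL[OF z1] nz d by (simp add: norm_mult mult_left_mono)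
    finally have R1: "Re (g z) \<le> - \<delta> * norm (q 0) + 3 * \<delta>^2"
      using gz zq by (simp add: power2_eq_square)
    have hgd: "norm (h z - g z) \<le> 4 * \<epsilon>"
      using hg_diff[OF e(1) e1 less_imp_le[OF gb[OF z1]]] hg[OF z1] by simp
    have "Re (h z - g z) \<le> norm (h z - g z)" by (rule complex_Re_le_cmod)
    then have R2: "Re (h z) \<le> Re (g z) + 4 * \<delta>^2" using hgd e by simp
    have r: "0 < 2*\<delta>" "2*\<delta> < 1" using d by auto
    have "z \<in> ball 0 (2*\<delta>)" using nz d by simp
    then have "h z \<in> cball (complex_of_real ((1 - (2*\<delta>)\<^sup>2) / 2)) ((1 + (2*\<delta>)\<^sup>2) / 2)"
      using cons r by blast
    from cball_Re[OF this] have R3': "Re (h z) \<ge> (1 - (2*\<delta>)\<^sup>2) / 2 - (1 + (2*\<delta>)\<^sup>2) / 2" .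
    have "(1 - (2*\<delta>)\<^sup>2) / 2 - (1 + (2*\<delta>)\<^sup>2) / 2 = - 4 * \<delta>^2"
      by (simp add: power2_eq_square divide_simps)
    with R3' have R3: "Re (h z) \<ge> - 4 * \<delta>^2" by linarith
    from R1 R2 R3 have "\<delta> * norm (q 0) \<le> 11 * \<delta>^2" by linarith
    then have "\<delta> * norm (q 0) \<le> \<delta> * (11 * \<delta>)" by (simp add: power2_eq_square)
    then show ?thesis using d by simp
  qed
  define q' where "q' = (\<lambda>z. q z / complex_of_real (1+\<delta>))"
  define a where "a = q' 0"
  define X where "X = norm a"
  have n1d: "norm (complex_of_real (1+\<delta>)) = 1+\<delta>" using d by (subst norm_of_real) simp
  have Xeq: "X = norm (q 0) / (1+\<delta>)" unfolding X_def a_def q'_def norm_divide n1d ..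
  have "norm (q 0) / (1+\<delta>) \<le> norm (q 0) / 1" using d by (intro divide_left_mono) auto
  then have X: "X \<le> 11*\<delta>" using Xeq q0b by simp
  have X0: "0 \<le> X" by (simp add: X_def)
  have q'b: "norm (q' z) < 1" if z: "norm z < 1" for z
    using qb[OF z] d unfolding q'_def norm_divide n1d by (simp add: divide_less_eq)
  have na: "norm a < 1" using q'b[of 0] by (simp add: a_def)
  have q'h: "q' holomorphic_on ball 0 1" unfolding q'_def using qh d by (intro holomorphic_intros) auto
  define Q where "Q = (\<lambda>z. Moebius_function 0 a (q' z))"
  have Qh: "Q holomorphic_on ball 0 1"
  proof -
    have q'img: "q' ` ball 0 1 \<subseteq> ball 0 1" using q'b by auto
    show ?thesis using holomorphic_on_compose_gen[OF q'h Moebius_function_holomorphic[OF na] q'img]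
      by (simp add: Q_def o_def)
  qed
  have Q0: "Q 0 = 0" by (simp add: Q_def a_def Moebius_function_eq_zero)
  have Qb: "norm (Q z) < 1" if "norm z < 1" for z
    unfolding Q_def using Moebius_function_norm_lt_1[OF na q'b[OF that]] .
  have kk: "norm (complex_of_real k) < 1" using k by simp
  have Qk: "norm (Q (complex_of_real k)) \<le> k"
    using Schwarz_Lemma(1)[OF Qh Q0 Qb kk] k by simp
  have q'k: "q' (complex_of_real k) = Moebius_function 0 (-a) (Q (complex_of_real k))"
    unfolding Q_def using Moebius_function_compose[of "-a" a "q' (complex_of_real k)"] na q'b[OF kk]
    by simp
  have "norm (q' (complex_of_real k)) \<le> (norm (Q (complex_of_real k)) + X) / (1 - X)"
    unfolding q'k X_def using moeb_inv_bound[OF na] Qb[OF kk] by simp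
  also have "\<dots> \<le> (k + X) / (1 - X)" using Qk X na by (simp add: X_def divide_right_mono)
  finally have Q'k: "norm (q' (complex_of_real k)) \<le> (k + X) / (1 - X)" .
  have qk: "norm (q (complex_of_real k)) = (1+\<delta>) * norm (q' (complex_of_real k))"
    using d unfolding q'_def norm_divide n1d by simp
  have Gk: "norm (g (complex_of_real k)) = k * norm (q (complex_of_real k))"
    using gq[OF kk] k by (simp add: norm_mult)
  have Hk: "norm (h (complex_of_real k)) \<le> (norm (g (complex_of_real k)) + \<epsilon>) / (1 - \<epsilon>)"
    using hg[OF kk] moeb_inv_bound[OF ne less_imp_le[OF gb[OF kk]]] e by simp
  show ?thesis
    using arith_final[OF X0 X d k Q'k qk Gk Hk e(1)] e by simp
qed

theorem lemma3p1:
  fixes k :: real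
  assumes "0 \<le> k" and "k < 1"
  shows "\<forall>\<eta>>0. \<exists>\<epsilon>0>0. \<forall>(\<epsilon>::real) (h::complex \<Rightarrow> complex).
           0 \<le> \<epsilon> \<and> \<epsilon> < \<epsilon>0 \<and>
           h holomorphic_on ball 0 1 \<and> h ` ball 0 1 \<subseteq> ball 0 1 \<and>
           h 0 = complex_of_real \<epsilon> \<and>
           (\<forall>r. 0 < r \<and> r < 1 \<longrightarrow>
              h ` ball 0 r \<subseteq> cball (complex_of_real ((1 - r\<^sup>2) / 2)) ((1 + r\<^sup>2) / 2))
           \<longrightarrow> cmod (h (complex_of_real k)) \<le> k\<^sup>2 + \<eta>"
proof (intro allI impI)
  fix \<eta> :: real assume eta: "\<eta> > 0"
  define \<delta> where "\<delta> = min (1/100) (\<eta>/200)"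
  have d: "0 < \<delta>" "\<delta> \<le> 1/100" using eta by (auto simp: \<delta>_def)
  have d2: "200*\<delta> \<le> \<eta>" by (simp add: \<delta>_def)
  show "\<exists>\<epsilon>0>0. \<forall>(\<epsilon>::real) (h::complex \<Rightarrow> complex).
           0 \<le> \<epsilon> \<and> \<epsilon> < \<epsilon>0 \<and>
           h holomorphic_on ball 0 1 \<and> h ` ball 0 1 \<subseteq> ball 0 1 \<and>
           h 0 = complex_of_real \<epsilon> \<and>
           (\<forall>r. 0 < r \<and> r < 1 \<longrightarrow>
              h ` ball 0 r \<subseteq> cball (complex_of_real ((1 - r\<^sup>2) / 2)) ((1 + r\<^sup>2) / 2))
           \<longrightarrow> cmod (h (complex_of_real k)) \<le> k\<^sup>2 + \<eta>"
  proof (rule exI[of _ "\<delta>^2"], intro conjI allI impI)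
    show "\<delta>^2 > 0" using d by simp
    fix \<epsilon> :: real and h :: "complex \<Rightarrow> complex"
    assume H: "0 \<le> \<epsilon> \<and> \<epsilon> < \<delta>^2 \<and>
           h holomorphic_on ball 0 1 \<and> h ` ball 0 1 \<subseteq> ball 0 1 \<and>
           h 0 = complex_of_real \<epsilon> \<and>
           (\<forall>r. 0 < r \<and> r < 1 \<longrightarrow>
              h ` ball 0 r \<subseteq> cball (complex_of_real ((1 - r\<^sup>2) / 2)) ((1 + r\<^sup>2) / 2))"
    have "cmod (h (complex_of_real k)) \<le> k\<^sup>2 + 200*\<delta>"
      using H by (intro core[OF assms d]) auto
    then show "cmod (h (complex_of_real k)) \<le> k\<^sup>2 + \<eta>" using d2 by linarith
  qed
qed

end
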